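(* Let $a:\mathbb{R}\to\mathbb{R}$ be a function whose restriction to $[0,\infty)$ is continuously differentiable and satisfies \[ \int_0^\infty\exp\Big(-2\int_0^w a(z)\,\mathrm{d}z\Big)\,\mathrm{d}w=\infty . \] Let $\gamma=(a^2+a')/2$ on $[0,\infty)$, and assume the following. - $\inf_{z\ge0}\gamma(z)>-\infty$. - There exist constants $c_1>0$, $c_2>0$ and $n\in\mathbb{N}$ such that for every $\kappa>0$, \[ \sup_{0\le v_1<v_2\le\kappa}\Big|\frac{a'(v_2)-a'(v_1)}{v_2-v_1}\Big|\le c_1+c_2\kappa^n . \] Fix $x>0$, let $\beta$ be a standard three-dimensional Brownian bridge on $[0,1]$, and define for $t\in\mathbb{R}_+$ \[ \xi(t)=\exp(-tI(t)),\qquad I(t)=\int_0^1\gamma\big(|ux\mathrm{e}_1+\sqrt t\,\beta_u|\big)\,\mathrm{d}u, \] where $\mathrm{e}_1=(1,0,0)^\top$. Then for every $T\in\mathbb{R}_+$ there is a random variable $\Phi_T$ such that \[ |\xi(t)-\xi(s)|\le\Phi_T|t-s|\quad\text{for all } s,t\in[0,T], \] and $\mathbb{E}_{\mathsf{BB}^3}[|\Phi_T|^m]<\infty$ for all $m\in\mathbb{N}$.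
   Context: A standard three-dimensional Brownian bridge is a three-dimensional standard Brownian motion on $[0,1]$ started at $0$ and conditioned to return to $0$ at time $1$. $\mathbb{E}_{\mathsf{BB}^3}$ is expectation under its law and $|\cdot|$ is the Euclidean norm. *)

theory Defs
  imports "HOL-Probability.Probability"
begin

definition centered_normal :: "real \<Rightarrow> real measure" where
  "centered_normal v = (if v = 0 then return borel 0
                        else density lborel (normal_density 0 (sqrt v)))"

text \<open>The Gaussian property is expressed by
  requiring every finite linear combination of the coordinates at finitely many
  times to be centered normal with the corresponding variance.\<close>
definition brownian_bridge3 :: "'a measure \<Rightarrow> ('a \<Rightarrow> real \<Rightarrow> real^3) \<Rightarrow> bool" where
  "brownian_bridge3 M B \<longleftrightarrow>
     prob_space M \<and>
     (\<forall>t\<in>{0..1}. (\<lambda>\<omega>. B \<omega> t) \<in> borel_measurable M) \<and>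
     (\<forall>\<omega>\<in>space M. continuous_on {0..1} (B \<omega>)) \<and>
     (\<forall>(ts :: nat \<Rightarrow> real) (c :: nat \<Rightarrow> 3 \<Rightarrow> real) (k :: nat).
        (\<forall>i<k. ts i \<in> {0..1}) \<longrightarrow>
        distr M borel (\<lambda>\<omega>. \<Sum>i<k. \<Sum>j\<in>UNIV. c i j * B \<omega> (ts i) $ j)
          = centered_normal (\<Sum>i<k. \<Sum>i'<k. \<Sum>j\<in>UNIV.
                c i j * c i' j * (min (ts i) (ts i') - ts i * ts i')))"

end

theory Submission
  imports Defs
begin


lemma pow_le_onepow:
  fixes K :: real assumes "0 \<le> K" "j \<le> N"
  shows "K ^ j \<le> (1 + K) ^ N"
proof -
  have "K ^ j \<le> (1+K)^j" using assms by (intro power_mono) auto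
  also have "\<dots> \<le> (1+K)^N" using assms by (intro power_increasing) auto
  finally show ?thesis .
qed

lemma gamma_lip:
  fixes a a' :: "real \<Rightarrow> real"
  assumes deriv: "\<And>z. z \<ge> 0 \<Longrightarrow> (a has_real_derivative a' z) (at z within {0..})"
    and lip: "\<exists>c1 c2 (n::nat). c1 > 0 \<and> c2 > 0 \<and>
               (\<forall>\<kappa>>0. \<forall>v1 v2. 0 \<le> v1 \<longrightarrow> v1 < v2 \<longrightarrow> v2 \<le> \<kappa> \<longrightarrow>
                  \<bar>(a' v2 - a' v1) / (v2 - v1)\<bar> \<le> c1 + c2 * \<kappa> ^ n)"
  shows "\<exists>D N. D > 0 \<and> (\<forall>K p q. 0 \<le> p \<longrightarrow> 0 \<le> q \<longrightarrow> p \<le> K \<longrightarrow> q \<le> K \<longrightarrow>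
            \<bar>(a p ^ 2 + a' p) / 2 - (a q ^ 2 + a' q) / 2\<bar> \<le> D * (1 + K) ^ N * \<bar>p - q\<bar>)"
proof -
  obtain c1 c2 and n :: nat where c: "c1 > 0" "c2 > 0" and
    L: "\<And>\<kappa> v1 v2. \<kappa> > 0 \<Longrightarrow> 0 \<le> v1 \<Longrightarrow> v1 < v2 \<Longrightarrow> v2 \<le> \<kappa> \<Longrightarrow>
                  \<bar>(a' v2 - a' v1) / (v2 - v1)\<bar> \<le> c1 + c2 * \<kappa> ^ n"
    using lip by blast
  have lip1: "\<bar>a' p - a' q\<bar> \<le> (c1 + c2 * K ^ n) * \<bar>p - q\<bar>"
    if "0 \<le> p" "0 \<le> q" "p \<le> K" "q \<le> K" for p q K
  proof -
    have gen: "\<bar>a' v2 - a' v1\<bar> \<le> (c1 + c2 * K ^ n) * \<bar>v2 - v1\<bar>"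
      if "0 \<le> v1" "v1 < v2" "v2 \<le> K" for v1 v2
    proof -
      have "K > 0" using that by linarith
      from L[OF this that] have "\<bar>a' v2 - a' v1\<bar> / \<bar>v2 - v1\<bar> \<le> c1 + c2 * K ^ n"
        by (simp add: abs_divide)
      moreover have "\<bar>v2 - v1\<bar> > 0" using that by auto
      ultimately show ?thesis by (simp add: pos_divide_le_eq)
    qed
    show ?thesis
    proof (cases p q rule: linorder_cases)
      case less then show ?thesis using gen[of p q] that by (simp add: abs_minus_commute)
    next
      case equal then show ?thesis by simp
    next
      case greater then show ?thesis using gen[of q p] that by (simp add: abs_minus_commute)
    qed
  qed
  define E where "E = \<bar>a' 0\<bar> + c1 + c2"
  have A1: "\<bar>a' p\<bar> \<le> E * (1 + K) ^ (n+1)" if "0 \<le> p" "p \<le> K" for p K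
  proof -
    have K: "0 \<le> K" using that by linarith
    have "\<bar>a' p\<bar> \<le> \<bar>a' 0\<bar> + \<bar>a' p - a' 0\<bar>" by linarith
    also have "\<dots> \<le> \<bar>a' 0\<bar> + (c1 + c2 * K ^ n) * K"
    proof -
      have "\<bar>a' p - a' 0\<bar> \<le> (c1 + c2 * K ^ n) * \<bar>p - 0\<bar>" using lip1[of p 0 K] that by simp
      also have "\<dots> \<le> (c1 + c2 * K ^ n) * K" using that c K
        by (intro mult_left_mono) auto
      finally show ?thesis by simp
    qed
    also have "\<dots> = \<bar>a' 0\<bar> * 1 + c1 * K + c2 * K ^ (n+1)" by (simp add: algebra_simps)
    also have "\<dots> \<le> \<bar>a' 0\<bar> * (1 + K) ^ (n+1) + c1 * (1 + K) ^ (n+1) + c2 * (1 + K) ^ (n+1)"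
      using c K pow_le_onepow[OF K, of 1 "n+1"] pow_le_onepow[OF K, of 0 "n+1"] pow_le_onepow[OF K, of "n+1" "n+1"]
      by (intro add_mono mult_left_mono) auto
    also have "\<dots> = E * (1 + K) ^ (n+1)" by (simp add: E_def algebra_simps)
    finally show ?thesis .
  qed
  have alip: "\<bar>a p - a q\<bar> \<le> E * (1 + K) ^ (n+1) * \<bar>p - q\<bar>"
    if "0 \<le> p" "0 \<le> q" "p \<le> K" "q \<le> K" for p q K
  proof -
    have "norm (a p - a q) \<le> (E * (1 + K) ^ (n+1)) * norm (p - q)"
    proof (rule field_differentiable_bound[of "{0..K}"])
      fix z assume z: "z \<in> {0..K}"
      show "(a has_field_derivative a' z) (at z within {0..K})"
        using deriv[of z] z by (auto intro: DERIV_subset)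
      show "norm (a' z) \<le> E * (1 + K) ^ (n+1)" using A1[of z K] z by auto
    qed (use that in auto)
    then show ?thesis by simp
  qed
  define F where "F = \<bar>a 0\<bar> + E"
  have A0: "\<bar>a p\<bar> \<le> F * (1 + K) ^ (n+2)" if "0 \<le> p" "p \<le> K" for p K
  proof -
    have K: "0 \<le> K" using that by linarith
    have E0: "0 \<le> E" by (simp add: E_def) (use c in linarith)
    have "\<bar>a p\<bar> \<le> \<bar>a 0\<bar> + \<bar>a p - a 0\<bar>" by linarith
    also have "\<bar>a p - a 0\<bar> \<le> E * (1 + K) ^ (n+1) * K" 
    proof -
      have "\<bar>a p - a 0\<bar> \<le> E * (1 + K) ^ (n+1) * \<bar>p - 0\<bar>" using alip[of p 0 K] that K by simp
      also have "\<dots> \<le> E * (1 + K) ^ (n+1) * K" using that E0 K by (intro mult_left_mono) auto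
      finally show ?thesis .
    qed
    also have "\<dots> \<le> E * (1 + K) ^ (n+1) * (1 + K)" using E0 K by (intro mult_left_mono) auto
    also have "\<dots> = E * (1 + K) ^ (n+2)" by simp
    also have "\<bar>a 0\<bar> \<le> \<bar>a 0\<bar> * (1 + K) ^ (n+2)" using pow_le_onepow[OF K, of 0 "n+2"] mult_left_mono[of 1 "(1 + K) ^ (n+2)" "\<bar>a 0\<bar>"]
      by simp
    finally show ?thesis by (simp add: F_def algebra_simps)
  qed
  define D where "D = E * F + (c1 + c2) + 1"
  have E0: "0 \<le> E" by (simp add: E_def) (use c in linarith)
  have F0: "0 \<le> F" using E0 by (simp add: F_def)
  show ?thesis
  proof (intro exI conjI allI impI)
    show "D > 0" using mult_nonneg_nonneg[OF E0 F0] c by (simp add: D_def)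
    fix K p q :: real assume pq: "0 \<le> p" "0 \<le> q" "p \<le> K" "q \<le> K"
    have K: "0 \<le> K" using pq by linarith
    define U where "U = (1 + K) ^ (n+1)"
    define V where "V = (1 + K) ^ (n+2)"
    define P where "P = (1 + K) ^ (2*n+3)"
    define d where "d = \<bar>p - q\<bar>"
    define Q where "Q = P * d"
    define EF where "EF = E * F"
    have pw: "U * V = P"
    proof -
      have "(n+1)+(n+2) = 2*n+3" by simp
      then show ?thesis unfolding U_def V_def P_def by (metis power_add)
    qed
    have U0: "0 \<le> U" "0 \<le> V" "0 \<le> P" "0 \<le> d" using K by (auto simp: U_def V_def P_def d_def)
    have g1: "\<bar>(a p ^ 2 + a' p) / 2 - (a q ^ 2 + a' q) / 2\<bar> \<le> (\<bar>a p - a q\<bar> * \<bar>a p + a q\<bar> + \<bar>a' p - a' q\<bar>) / 2"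
    proof -
      have e: "(a p ^ 2 + a' p) / 2 - (a q ^ 2 + a' q) / 2 = ((a p - a q) * (a p + a q) + (a' p - a' q)) / 2"
        by (simp add: power2_eq_square algebra_simps add_divide_distrib diff_divide_distrib)
      have "\<bar>(a p - a q) * (a p + a q) + (a' p - a' q)\<bar> \<le> \<bar>a p - a q\<bar> * \<bar>a p + a q\<bar> + \<bar>a' p - a' q\<bar>"
        by (metis abs_mult abs_triangle_ineq)
      then show ?thesis unfolding e by simp
    qed
    have t1: "\<bar>a p - a q\<bar> * \<bar>a p + a q\<bar> \<le> (E * U * d) * (2 * F * V)"
    proof (rule mult_mono)
      show "\<bar>a p - a q\<bar> \<le> E * U * d" using alip[OF pq] by (simp add: U_def d_def)
      show "\<bar>a p + a q\<bar> \<le> 2 * F * V" using A0[of p K] A0[of q K] pq by (simp add: V_def)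
      show "0 \<le> E * U * d" using E0 U0 by simp
    qed simp
    have t2: "(E * U * d) * (2 * F * V) = 2 * (EF * Q)"
      unfolding Q_def EF_def pw[symmetric] by (simp add: algebra_simps)
    have t3: "\<bar>a' p - a' q\<bar> \<le> (c1 + c2) * Q"
    proof -
      have "c1 + c2 * K ^ n \<le> c1 * P + c2 * P"
        unfolding P_def
        using c pow_le_onepow[OF K, of 0 "2*n+3"] pow_le_onepow[OF K, of n "2*n+3"]
        by (intro add_mono mult_left_mono) auto
      then have "(c1 + c2 * K ^ n) * d \<le> (c1 * P + c2 * P) * d"
        using U0 by (intro mult_right_mono) auto
      moreover have "(c1 * P + c2 * P) * d = (c1 + c2) * Q" by (simp add: Q_def algebra_simps)
      ultimately show ?thesis using lip1[OF pq] by (simp add: d_def)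
    qed
    have Q0: "0 \<le> Q" "0 \<le> EF" using U0 E0 F0 by (auto simp: Q_def EF_def)
    have DQ: "D * (1 + K) ^ (2*n+3) * \<bar>p - q\<bar> = EF * Q + (c1 + c2) * Q + Q"
      by (simp add: D_def EF_def Q_def P_def d_def algebra_simps)
    have "(c1 + c2) * Q \<ge> 0" using c Q0 by simp
    have "EF * Q \<ge> 0" using Q0 by simp
    show "\<bar>(a p ^ 2 + a' p) / 2 - (a q ^ 2 + a' q) / 2\<bar> \<le> D * (1 + K) ^ (2*n+3) * \<bar>p - q\<bar>"
      unfolding DQ
    proof -
      have aux: "L \<le> W + R + Q"
        if "L \<le> (X + Y) / 2" "X \<le> Z" "Z = 2 * W" "Y \<le> R" "0 \<le> R" "0 \<le> Q" for L X Y Z W R Q :: real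
        using that by argo
      show "\<bar>(a p ^ 2 + a' p) / 2 - (a q ^ 2 + a' q) / 2\<bar> \<le> EF * Q + (c1 + c2) * Q + Q"
        by (rule aux[OF g1 t1 t2 t3 \<open>(c1 + c2) * Q \<ge> 0\<close> Q0(1)])
    qed
  qed
qed



lemma exp_lip:
  fixes A B M :: real assumes "-M \<le> A" "-M \<le> B"
  shows "\<bar>exp (-A) - exp (-B)\<bar> \<le> exp M * \<bar>A - B\<bar>"
proof -
  have key: "\<bar>exp (-A) - exp (-B)\<bar> \<le> exp M * (B - A)" if "-M \<le> A" "A \<le> B" for A B
  proof -
    have "exp (-A) * (1 + (A - B)) \<le> exp (-A) * exp (A - B)"
      by (intro mult_left_mono) auto
    also have "exp (-A) * exp (A - B) = exp (-B)" by (simp add: exp_add[symmetric])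
    finally have 1: "exp (-A) - exp (-B) \<le> exp (-A) * (B - A)" by (simp add: algebra_simps)
    have "exp (-A) \<le> exp M" using that by simp
    then have "exp (-A) * (B - A) \<le> exp M * (B - A)" using that by (intro mult_right_mono) auto
    moreover have "exp (-B) \<le> exp (-A)" using that by simp
    ultimately show ?thesis using 1 by simp
  qed
  show ?thesis
  proof (cases "A \<le> B")
    case True then show ?thesis using key[of A B] assms by simp
  next
    case False
    then have "\<bar>exp (-B) - exp (-A)\<bar> \<le> exp M * (A - B)" using key[of B A] assms by simp
    moreover have "\<bar>exp (-B) - exp (-A)\<bar> = \<bar>exp (-A) - exp (-B)\<bar>" by (rule abs_minus_commute)
    moreover have "\<bar>A - B\<bar> = A - B" using False by simp
    ultimately show ?thesis by metis
  qed
qed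

lemma sqrt_diff_bound:
  fixes s t T :: real assumes "0 \<le> s" "s \<le> T" "0 \<le> t"
  shows "s * \<bar>sqrt t - sqrt s\<bar> \<le> sqrt T * \<bar>t - s\<bar>"
proof -
  define d where "d = \<bar>sqrt t - sqrt s\<bar>"
  have d0: "0 \<le> d" by (simp add: d_def)
  have ss: "sqrt s * sqrt s = s" using assms by simp
  have e1: "s * d = sqrt s * (sqrt s * d)" by (metis ss mult.assoc)
  have "(sqrt t + sqrt s) * (sqrt t - sqrt s) = sqrt t * sqrt t - sqrt s * sqrt s"
    by (rule square_diff_square_factored[symmetric])
  also have "\<dots> = t - s" using assms by simp
  finally have "\<bar>(sqrt t + sqrt s) * (sqrt t - sqrt s)\<bar> = \<bar>t - s\<bar>" by simp
  moreover have "\<bar>(sqrt t + sqrt s) * (sqrt t - sqrt s)\<bar> = (sqrt t + sqrt s) * d"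
    unfolding d_def abs_mult using assms by simp
  ultimately have e2: "(sqrt t + sqrt s) * d = \<bar>t - s\<bar>" by simp
  have "sqrt s * d \<le> (sqrt t + sqrt s) * d"
    using assms d0 by (intro mult_right_mono) auto
  then have le1: "sqrt s * d \<le> \<bar>t - s\<bar>" using e2 by simp
  have "sqrt s * (sqrt s * d) \<le> sqrt s * \<bar>t - s\<bar>"
    using le1 assms by (intro mult_left_mono) auto
  also have "\<dots> \<le> sqrt T * \<bar>t - s\<bar>" using assms by (intro mult_right_mono) auto
  finally have "sqrt s * (sqrt s * d) \<le> sqrt T * \<bar>t - s\<bar>" .
  then have "s * d \<le> sqrt T * \<bar>t - s\<bar>" by (subst e1)
  then show ?thesis by (simp only: d_def)
qed

definition Rf :: "real \<Rightarrow> real \<Rightarrow> nat \<Rightarrow> real \<Rightarrow> real \<Rightarrow> real \<Rightarrow> real" where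
  "Rf g0 D N x T y = g0 + D * (1 + (x + sqrt T * y)) ^ N * (x + sqrt T * y) + sqrt T * (D * (1 + (x + sqrt T * y)) ^ N * y)"

lemma xi_lip:
  fixes g :: "real \<Rightarrow> real" and \<beta> :: "real \<Rightarrow> real^3" and x T s t C D :: real and N :: nat
  assumes gcont: "continuous_on {0..} g"
    and glip: "\<And>K p q. 0 \<le> p \<Longrightarrow> 0 \<le> q \<Longrightarrow> p \<le> K \<Longrightarrow> q \<le> K \<Longrightarrow> \<bar>g p - g q\<bar> \<le> D * (1 + K) ^ N * \<bar>p - q\<bar>"
    and gbdd: "\<And>z. z \<ge> 0 \<Longrightarrow> g z \<ge> C"
    and D: "D \<ge> 0"
    and bc: "continuous_on {0..1} \<beta>"
    and x: "x > 0" and s: "s \<in> {0..T}" and t: "t \<in> {0..T}"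
  shows "\<bar>exp (- t * integral {0..1} (\<lambda>u. g (norm ((u * x) *\<^sub>R axis 1 1 + sqrt t *\<^sub>R \<beta> u))))
          - exp (- s * integral {0..1} (\<lambda>u. g (norm ((u * x) *\<^sub>R axis 1 1 + sqrt s *\<^sub>R \<beta> u))))\<bar>
         \<le> exp (T * \<bar>C\<bar>) * integral {0..1} (\<lambda>u. Rf \<bar>g 0\<bar> D N x T (norm (\<beta> u))) * \<bar>t - s\<bar>"
proof -
  define G where "G r u = g (norm ((u * x) *\<^sub>R axis 1 1 + r *\<^sub>R \<beta> u))" for r u
  have Gc: "continuous_on {0..1} (G r)" for r
    unfolding G_def
    by (rule continuous_on_compose2[OF gcont]) (auto intro!: continuous_intros bc)
  have Gi: "G r integrable_on {0..1}" for r by (rule integrable_continuous_interval[OF Gc])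
  define R where "R u = Rf \<bar>g 0\<bar> D N x T (norm (\<beta> u))" for u
  have Rc: "continuous_on {0..1} R"
    unfolding R_def Rf_def by (intro continuous_intros bc)
  have T0: "0 \<le> T" "0 \<le> s" "0 \<le> t" "s \<le> T" "t \<le> T" using s t by auto
  have pt: "\<bar>t * G (sqrt t) u - s * G (sqrt s) u\<bar> \<le> \<bar>t - s\<bar> * R u" if u: "u \<in> {0..1}" for u
  proof -
    define y where "y = norm (\<beta> u)"
    define K where "K = x + sqrt T * y"
    define p where "p = norm ((u * x) *\<^sub>R axis 1 1 + sqrt t *\<^sub>R \<beta> u)"
    define q where "q = norm ((u * x) *\<^sub>R axis 1 1 + sqrt s *\<^sub>R \<beta> u)"
    define L where "L = D * (1 + K) ^ N"
    have y0: "0 \<le> y" by (simp add: y_def)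
    have K0: "0 \<le> K" using x y0 T0 by (simp add: K_def)
    have L0: "0 \<le> L" using D K0 by (simp add: L_def)
    have nb: "norm ((u * x) *\<^sub>R axis 1 1 + r *\<^sub>R \<beta> u) \<le> K" if r: "0 \<le> r" "r \<le> sqrt T" for r
    proof -
      have "norm ((u * x) *\<^sub>R axis 1 1 + r *\<^sub>R \<beta> u) \<le> norm ((u * x) *\<^sub>R (axis 1 1 :: real^3)) + norm (r *\<^sub>R \<beta> u)"
        by (rule norm_triangle_ineq)
      also have "norm ((u * x) *\<^sub>R (axis 1 1 :: real^3)) = u * x" using u x by simp
      also have "norm (r *\<^sub>R \<beta> u) = r * y" using r by (simp add: y_def)
      also have "u * x \<le> x" using u x by (simp add: mult_le_cancel_right1)
      also have "r * y \<le> sqrt T * y" using r y0 by (intro mult_right_mono) auto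
      finally show ?thesis by (simp add: K_def)
    qed
    have pK: "p \<le> K" unfolding p_def using T0 by (intro nb) auto
    have qK: "q \<le> K" unfolding q_def using T0 by (intro nb) auto
    have p0: "0 \<le> p" "0 \<le> q" by (auto simp: p_def q_def)
    have pq: "\<bar>p - q\<bar> \<le> \<bar>sqrt t - sqrt s\<bar> * y"
    proof -
      have "\<bar>p - q\<bar> \<le> norm (((u * x) *\<^sub>R axis 1 1 + sqrt t *\<^sub>R \<beta> u) - ((u * x) *\<^sub>R axis 1 1 + sqrt s *\<^sub>R \<beta> u))"
        unfolding p_def q_def by (rule norm_triangle_ineq3)
      also have "((u * x) *\<^sub>R axis 1 1 + sqrt t *\<^sub>R \<beta> u) - ((u * x) *\<^sub>R axis 1 1 + sqrt s *\<^sub>R \<beta> u)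
                 = (sqrt t - sqrt s) *\<^sub>R \<beta> u" by (simp add: scaleR_diff_left)
      also have "norm ((sqrt t - sqrt s) *\<^sub>R \<beta> u) = \<bar>sqrt t - sqrt s\<bar> * y" by (simp add: y_def)
      finally show ?thesis .
    qed
    have gp: "\<bar>g p\<bar> \<le> \<bar>g 0\<bar> + L * K"
    proof -
      have "\<bar>g p - g 0\<bar> \<le> L * \<bar>p - 0\<bar>" using glip[of p 0 K] p0 pK K0 by (simp add: L_def)
      also have "\<dots> \<le> L * K" using p0 pK L0 by (intro mult_left_mono) auto
      finally show ?thesis by linarith
    qed
    have gd: "s * \<bar>g p - g q\<bar> \<le> \<bar>t - s\<bar> * (sqrt T * (L * y))"
    proof -
      have "\<bar>g p - g q\<bar> \<le> L * \<bar>p - q\<bar>" using glip[of p q K] p0 pK qK by (simp add: L_def)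
      also have "\<dots> \<le> L * (\<bar>sqrt t - sqrt s\<bar> * y)" using pq L0 by (intro mult_left_mono) auto
      finally have "s * \<bar>g p - g q\<bar> \<le> s * (L * (\<bar>sqrt t - sqrt s\<bar> * y))"
        using T0 by (intro mult_left_mono) auto
      also have "\<dots> = (s * \<bar>sqrt t - sqrt s\<bar>) * (L * y)" by (simp add: algebra_simps)
      also have "\<dots> \<le> (sqrt T * \<bar>t - s\<bar>) * (L * y)"
        using sqrt_diff_bound[of s T t] T0 L0 y0 by (intro mult_right_mono) auto
      also have "\<dots> = \<bar>t - s\<bar> * (sqrt T * (L * y))" by (simp add: algebra_simps)
      finally show ?thesis .
    qed
    have e: "t * g p - s * g q = (t - s) * g p + s * (g p - g q)" by (simp add: algebra_simps)
    have "\<bar>t * g p - s * g q\<bar> \<le> \<bar>t - s\<bar> * \<bar>g p\<bar> + s * \<bar>g p - g q\<bar>"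
      unfolding e using T0 by (metis abs_mult abs_of_nonneg abs_triangle_ineq)
    also have "\<bar>t - s\<bar> * \<bar>g p\<bar> \<le> \<bar>t - s\<bar> * (\<bar>g 0\<bar> + L * K)" using gp by (intro mult_left_mono) auto
    also note gd
    also have "\<bar>t - s\<bar> * (\<bar>g 0\<bar> + L * K) + \<bar>t - s\<bar> * (sqrt T * (L * y)) = \<bar>t - s\<bar> * R u"
      by (simp add: R_def Rf_def L_def K_def y_def algebra_simps)
    finally show ?thesis by (simp add: G_def p_def q_def)
  qed
  have Dc: "continuous_on {0..1} (\<lambda>u. t * G (sqrt t) u - s * G (sqrt s) u)"
    by (intro continuous_intros Gc)
  have Rc': "continuous_on {0..1} (\<lambda>u. \<bar>t - s\<bar> * R u)" by (intro continuous_intros Rc)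
  have eqint: "t * integral {0..1} (G (sqrt t)) - s * integral {0..1} (G (sqrt s))
      = integral {0..1} (\<lambda>u. t * G (sqrt t) u - s * G (sqrt s) u)"
  proof -
    have i1: "(\<lambda>u. t * G (sqrt t) u) integrable_on {0..1}"
      by (rule integrable_continuous_interval) (intro continuous_intros Gc)
    have i2: "(\<lambda>u. s * G (sqrt s) u) integrable_on {0..1}"
      by (rule integrable_continuous_interval) (intro continuous_intros Gc)
    show ?thesis using integral_diff[OF i1 i2] by simp
  qed
  have bnd: "\<bar>t * integral {0..1} (G (sqrt t)) - s * integral {0..1} (G (sqrt s))\<bar> \<le> \<bar>t - s\<bar> * integral {0..1} R"
  proof -
    have "norm (integral {0..1} (\<lambda>u. t * G (sqrt t) u - s * G (sqrt s) u)) \<le> integral {0..1} (\<lambda>u. \<bar>t - s\<bar> * R u)"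
      by (rule integral_norm_bound_integral[OF integrable_continuous_interval[OF Dc] integrable_continuous_interval[OF Rc']])
         (use pt in auto)
    then show ?thesis unfolding eqint by simp
  qed
  have lowI: "C \<le> integral {0..1} (G r)" for r
  proof -
    have "integral {0..1} (\<lambda>_::real. C) \<le> integral {0..1} (G r)"
      by (rule Henstock_Kurzweil_Integration.integral_le) (auto simp: Gi G_def intro!: gbdd)
    then show ?thesis by simp
  qed
  have low: "- (T * \<bar>C\<bar>) \<le> r * integral {0..1} (G (sqrt r))" if "0 \<le> r" "r \<le> T" for r
  proof -
    have "r * (- \<bar>C\<bar>) \<le> r * integral {0..1} (G (sqrt r))"
      using lowI[of "sqrt r"] that by (intro mult_left_mono) auto
    moreover have "T * (- \<bar>C\<bar>) \<le> r * (- \<bar>C\<bar>)" using that by (intro mult_right_mono_neg) auto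
    ultimately show ?thesis by simp
  qed
  have "\<bar>exp (- (t * integral {0..1} (G (sqrt t)))) - exp (- (s * integral {0..1} (G (sqrt s))))\<bar>
        \<le> exp (T * \<bar>C\<bar>) * \<bar>t * integral {0..1} (G (sqrt t)) - s * integral {0..1} (G (sqrt s))\<bar>"
    by (rule exp_lip) (use low T0 in auto)
  also have "\<dots> \<le> exp (T * \<bar>C\<bar>) * (\<bar>t - s\<bar> * integral {0..1} R)"
    using bnd by (intro mult_left_mono) auto
  finally have fin: "\<bar>exp (- (t * integral {0..1} (G (sqrt t)))) - exp (- (s * integral {0..1} (G (sqrt s))))\<bar>
        \<le> exp (T * \<bar>C\<bar>) * (\<bar>t - s\<bar> * integral {0..1} R)" .
  have GG: "\<And>r. G r = (\<lambda>u. g (norm ((u * x) *\<^sub>R axis 1 1 + r *\<^sub>R \<beta> u)))" by (simp add: G_def fun_eq_iff)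
  have RR: "R = (\<lambda>u. Rf \<bar>g 0\<bar> D N x T (norm (\<beta> u)))" by (simp add: R_def fun_eq_iff)
  show ?thesis using fin unfolding GG RR by (simp add: mult_ac)
qed



lemma coord_moment:
  fixes B :: "'w \<Rightarrow> real \<Rightarrow> real^3"
  assumes BB: "brownian_bridge3 M B" and u: "u \<in> {0..1}"
  shows "(\<integral>\<^sup>+ \<omega>. ennreal ((B \<omega> u $ j) ^ (2 * k)) \<partial>M) \<le> ennreal (fact (2 * k))"
proof -
  have Bm: "(\<lambda>\<omega>. B \<omega> u) \<in> borel_measurable M" using BB u unfolding brownian_bridge3_def by auto
  have Bj: "(\<lambda>\<omega>. B \<omega> u $ j) \<in> borel_measurable M" using measurable_compose[OF Bm borel_measurable_nth] by simp
  have dist: "distr M borel (\<lambda>\<omega>. B \<omega> u $ j) = centered_normal (u - u * u)"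
  proof -
      have H: "\<forall>(ts :: nat \<Rightarrow> real) (c :: nat \<Rightarrow> 3 \<Rightarrow> real) (k :: nat).
        (\<forall>i<k. ts i \<in> {0..1}) \<longrightarrow>
        distr M borel (\<lambda>\<omega>. \<Sum>i<k. \<Sum>j\<in>UNIV. c i j * B \<omega> (ts i) $ j)
          = centered_normal (\<Sum>i<k. \<Sum>i'<k. \<Sum>j\<in>UNIV.
                c i j * c i' j * (min (ts i) (ts i') - ts i * ts i'))"
        using BB unfolding brownian_bridge3_def by blast
      have d1: "(\<Sum>ja\<in>UNIV. (if ja = j then 1 else 0) * f ja) = f j" for f :: "3 \<Rightarrow> real"
      proof -
        have "(\<Sum>ja\<in>UNIV. (if ja = j then 1 else 0) * f ja) = (\<Sum>ja\<in>UNIV. if ja = j then f ja else 0)"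
          by (rule sum.cong) auto
        also have "\<dots> = f j" by simp
        finally show ?thesis .
      qed
      have d2: "(\<Sum>ja\<in>UNIV. (if ja = j then 1 else 0) * (if ja = j then 1 else 0) * c) = c" for c :: real
      proof -
        have "(\<Sum>ja\<in>(UNIV::3 set). (if ja = j then 1 else 0) * (if ja = j then 1 else 0) * c) = (\<Sum>ja\<in>(UNIV::3 set). if ja = j then c else 0)"
          by (rule sum.cong) auto
        also have "\<dots> = c" by simp
        finally show ?thesis .
      qed
      show ?thesis using H[rule_format, of 1 "\<lambda>_. u" "\<lambda>_ j'. if j' = j then 1 else 0"] u
        by (simp only: d1 d2 lessThan_Suc lessThan_0 sum.insert sum.empty finite.emptyI empty_iff
             add_0_right min.idem atLeastAtMost_iff) auto
    qed
  have "(\<integral>\<^sup>+ \<omega>. ennreal ((B \<omega> u $ j) ^ (2 * k)) \<partial>M)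
      = (\<integral>\<^sup>+ y. ennreal (y ^ (2 * k)) \<partial>distr M borel (\<lambda>\<omega>. B \<omega> u $ j))"
    by (subst nn_integral_distr) (use Bj in auto)
  also have "\<dots> = (\<integral>\<^sup>+ y. ennreal (y ^ (2 * k)) \<partial>centered_normal (u - u * u))" unfolding dist ..
  also have "\<dots> \<le> ennreal (fact (2 * k))"
  proof (cases "u - u * u = 0")
    case True
    then have "(\<integral>\<^sup>+ y. ennreal (y ^ (2 * k)) \<partial>centered_normal (u - u * u)) = ennreal (0 ^ (2 * k))"
      unfolding centered_normal_def by (simp add: nn_integral_return)
    also have "\<dots> \<le> ennreal (fact (2 * k))"
      by (cases k) (auto simp: fact_ge_1)
    finally show ?thesis .
  next
    case False
    define \<sigma> where "\<sigma> = sqrt (u - u * u)"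
    have v0: "0 < u - u * u"
    proof -
      have "0 \<le> u * (1 - u)" using u by auto
      then have "0 \<le> u - u * u" by (simp add: algebra_simps)
      then show ?thesis using False by linarith
    qed
    have v1: "u - u * u \<le> 1" using u by (simp add: algebra_simps) (smt (verit) mult_nonneg_nonneg)
    have s2: "\<sigma>\<^sup>2 = u - u * u" using v0 by (simp add: \<sigma>_def)
    have "(\<integral>\<^sup>+ y. ennreal (y ^ (2 * k)) \<partial>centered_normal (u - u * u))
        = (\<integral>\<^sup>+ y. ennreal (normal_density 0 \<sigma> y) * ennreal (y ^ (2 * k)) \<partial>lborel)"
      unfolding centered_normal_def using False
      by (simp add: \<sigma>_def nn_integral_density)
    also have "\<dots> = (\<integral>\<^sup>+ y. ennreal (normal_density 0 \<sigma> y * (y - 0) ^ (2 * k)) \<partial>lborel)"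
      by (intro nn_integral_cong) (simp add: ennreal_mult' power_even_eq)
    also have "\<dots> = ennreal (fact (2 * k) / ((2 / \<sigma>\<^sup>2)^k * fact k))"
    proof -
      have hb: "has_bochner_integral lborel (\<lambda>x. normal_density 0 \<sigma> x * (x - 0) ^ (2 * k)) (fact (2 * k) / ((2 / \<sigma>\<^sup>2)^k * fact k))"
        by (rule normal_moment_even) (use v0 in \<open>simp add: \<sigma>_def\<close>)
      show ?thesis
        using hb by (subst nn_integral_eq_integral)
          (auto simp: has_bochner_integral_iff power_even_eq)
    qed
    also have "\<dots> \<le> ennreal (fact (2 * k))"
    proof (intro ennreal_leI)
      have a: "0 < \<sigma>\<^sup>2" "\<sigma>\<^sup>2 \<le> 1" using v0 v1 s2 by simp_all
      have "1 \<le> 2 / \<sigma>\<^sup>2" using a by (simp add: le_divide_eq)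
      then have "1 \<le> (2 / \<sigma>\<^sup>2)^k" by (rule one_le_power)
      moreover have "(1::real) \<le> fact k" by (rule fact_ge_1)
      ultimately have "1 \<le> (2 / \<sigma>\<^sup>2)^k * fact k" by (metis mult_mono' mult_1 zero_le_one)
      then show "fact (2 * k) / ((2 / \<sigma>\<^sup>2)^k * fact k) \<le> (fact (2 * k) :: real)"
      proof -
        have "fact (2 * k) / ((2 / \<sigma>\<^sup>2)^k * fact k) \<le> (fact (2 * k) :: real) / 1"
          using \<open>1 \<le> (2 / \<sigma>\<^sup>2)^k * fact k\<close> by (intro divide_left_mono) auto
        then show ?thesis by simp
      qed
    qed
    finally show ?thesis .
  qed
  finally show ?thesis .
qed



lemma pow_sum2:
  fixes a b :: real assumes "0 \<le> a" "0 \<le> b"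
  shows "(a + b) ^ q \<le> 2 ^ q * (a ^ q + b ^ q)"
proof -
  have "(a + b) ^ q \<le> (2 * max a b) ^ q" using assms by (intro power_mono) auto
  also have "\<dots> = 2 ^ q * max a b ^ q" by (simp add: power_mult_distrib)
  also have "max a b ^ q \<le> a ^ q + b ^ q" using assms by (cases "a \<le> b") (auto simp: max_def)
  then have "2 ^ q * max a b ^ q \<le> 2 ^ q * (a ^ q + b ^ q)" by (intro mult_left_mono) auto
  finally show ?thesis .
qed

lemma Rf_bound:
  assumes g0: "0 \<le> g0" and D: "0 \<le> D" and x: "0 \<le> x" and T: "0 \<le> T" and y: "0 \<le> y"
  shows "Rf g0 D N x T y \<le> (2 ^ (N+1) * (g0 + D * (1 + x + sqrt T) ^ N * (x + 2 * sqrt T))) * (1 + y ^ 2) ^ (N+1)"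
proof -
  define K where "K = x + sqrt T * y"
  define S where "S = sqrt T"
  define Y where "Y = (1 + y) ^ N"
  define Z where "Z = (1 + x + S) ^ N"
  have S0: "0 \<le> S" using T by (simp add: S_def)
  have Y0: "0 \<le> Y" "1 \<le> Y" using y by (auto simp: Y_def)
  have Z0: "0 \<le> Z" using x S0 by (simp add: Z_def)
  have K0: "0 \<le> K" using x S0 y by (simp add: K_def S_def)
  have "1 + K \<le> (1 + x + S) * (1 + y)"
    using x y S0 by (simp add: K_def S_def algebra_simps)
  then have "(1 + K) ^ N \<le> ((1 + x + S) * (1 + y)) ^ N" using K0 by (intro power_mono) auto
  then have PK: "(1 + K) ^ N \<le> Z * Y" by (simp add: Z_def Y_def power_mult_distrib)
  have KS: "K + S * y \<le> (x + 2 * S) * (1 + y)"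
    using x y S0 by (simp add: K_def S_def algebra_simps)
  have "Rf g0 D N x T y = g0 + D * (1 + K) ^ N * (K + S * y)"
    by (simp add: Rf_def K_def S_def algebra_simps)
  also have "D * (1 + K) ^ N * (K + S * y) \<le> D * (Z * Y) * ((x + 2 * S) * (1 + y))"
    using PK KS D K0 S0 y Z0 Y0 by (intro mult_mono) auto
  also have "g0 \<le> g0 * (Y * (1 + y))"
  proof -
    have "1 \<le> Y * (1 + y)" using Y0 y by (metis le_add_same_cancel1 mult_1 mult_mono zero_le_one)
    then show ?thesis using g0 mult_left_mono[of 1 "Y * (1 + y)" g0] by simp
  qed
  also have "g0 * (Y * (1 + y)) + D * (Z * Y) * ((x + 2 * S) * (1 + y)) = (g0 + D * Z * (x + 2 * S)) * (1 + y) ^ (N+1)"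
    by (simp add: Y_def algebra_simps)
  also have "(1 + y) ^ (N+1) \<le> (2 * (1 + y ^ 2)) ^ (N+1)"
  proof (rule power_mono)
    have c: "y \<le> 1 \<or> y \<le> y ^ 2"
    proof (cases "y \<le> 1")
      case False
      then have "y * 1 \<le> y * y" using y by (intro mult_left_mono) auto
      then show ?thesis by (simp add: power2_eq_square)
    qed simp
    have "0 \<le> y ^ 2" by simp
    with c show "1 + y \<le> 2 * (1 + y ^ 2)" by argo
  qed (use y in auto)
  then have "(g0 + D * Z * (x + 2 * S)) * (1 + y) ^ (N+1) \<le> (g0 + D * Z * (x + 2 * S)) * (2 * (1 + y ^ 2)) ^ (N+1)"
    using g0 D Z0 x S0 by (intro mult_left_mono) auto
  also have "\<dots> = (g0 + D * Z * (x + 2 * S)) * (2 ^ (N+1) * (1 + y ^ 2) ^ (N+1))"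
    by (simp only: power_mult_distrib)
  also have "\<dots> = (2 ^ (N+1) * (g0 + D * (1 + x + sqrt T) ^ N * (x + 2 * sqrt T))) * (1 + y ^ 2) ^ (N+1)"
    by (simp only: Z_def S_def mult_ac)
  finally show ?thesis by simp
qed

lemma pow_integral_le:
  fixes f :: "real \<Rightarrow> real"
  assumes fc: "continuous_on {0..1} f" and f0: "\<And>u. u \<in> {0..1} \<Longrightarrow> 0 \<le> f u"
  shows "(integral {0..1} f) ^ m \<le> integral {0..1} (\<lambda>u. f u ^ m)"
proof -
  define c where "c = integral {0..1} f"
  have fi: "f integrable_on {0..1}" by (rule integrable_continuous_interval[OF fc])
  have fmi: "(\<lambda>u. f u ^ m) integrable_on {0..1}"
    by (rule integrable_continuous_interval) (intro continuous_intros fc)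
  have c0: "0 \<le> c" unfolding c_def using f0 by (intro integral_nonneg fi) auto
  show ?thesis
  proof (cases "m = 0")
    case True then show ?thesis by simp
  next
    case m: False
    show ?thesis
    proof (cases "c = 0")
      case True
      have "0 \<le> integral {0..1} (\<lambda>u. f u ^ m)" using f0 by (intro integral_nonneg fmi) auto
      then show ?thesis using True m by (simp add: c_def[symmetric] power_0_left)
    next
      case False
      then have cp: "0 < c" using c0 by simp
      define A where "A = c ^ m * (1 - real m)"
      define Bc where "Bc = c ^ m * real m / c"
      have tan: "A + Bc * f u \<le> f u ^ m" if u: "u \<in> {0..1}" for u
      proof -
        have "-1 \<le> f u / c - 1" using f0[OF u] cp by simp
        from Bernoulli_inequality[OF this, of m]
        have "1 + real m * (f u / c - 1) \<le> (f u / c) ^ m" by simp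
        then have "c ^ m * (1 + real m * (f u / c - 1)) \<le> c ^ m * (f u / c) ^ m"
          using cp by (intro mult_left_mono) auto
        also have "c ^ m * (f u / c) ^ m = f u ^ m" using cp by (simp add: power_divide)
        also have "c ^ m * (1 + real m * (f u / c - 1)) = A + Bc * f u"
          using cp by (simp add: A_def Bc_def field_simps)
        finally show ?thesis .
      qed
      have i2: "(\<lambda>u. Bc * f u) integrable_on {0..1}"
        by (rule integrable_continuous_interval) (intro continuous_intros fc)
      have i3: "(\<lambda>u. A + Bc * f u) integrable_on {0..1}"
        by (rule integrable_continuous_interval) (intro continuous_intros fc)
      have "integral {0..1} (\<lambda>u. A + Bc * f u) \<le> integral {0..1} (\<lambda>u. f u ^ m)"
        by (rule Henstock_Kurzweil_Integration.integral_le[OF i3 fmi]) (rule tan)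
      moreover have "integral {0..1} (\<lambda>u. A + Bc * f u) = A + Bc * c"
      proof -
        have i1: "(\<lambda>u::real. A) integrable_on {0..1}" by (rule integrable_continuous_interval) (rule continuous_on_const)
        have i2: "(\<lambda>u. Bc * f u) integrable_on {0..1}"
          by (rule integrable_continuous_interval) (intro continuous_intros fc)
        show ?thesis using integral_add[OF i1 i2] by (simp add: c_def)
      qed
      moreover have "A + Bc * c = c ^ m" using cp by (simp add: A_def Bc_def field_simps)
      ultimately show ?thesis by (simp add: c_def)
    qed
  qed
qed



lemma norm3_sq: "norm (v :: real^3) ^ 2 = (v $ 1) ^ 2 + (v $ 2) ^ 2 + (v $ 3) ^ 2"
  unfolding power2_norm_eq_inner inner_vec_def sum_3 by (simp add: power2_eq_square)

lemma h_pointwise: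
  fixes v :: "real^3"
  shows "ennreal ((1 + norm v ^ 2) ^ q) \<le> ennreal (4 ^ q) * (1 + ennreal ((v $ 1) ^ (2 * q)) + ennreal ((v $ 2) ^ (2 * q)) + ennreal ((v $ 3) ^ (2 * q)))"
proof -
  define a where "a = (v $ 1) ^ 2"
  define b where "b = (v $ 2) ^ 2"
  define c where "c = (v $ 3) ^ 2"
  have abc: "0 \<le> a" "0 \<le> b" "0 \<le> c" by (auto simp: a_def b_def c_def)
  have "(1 + norm v ^ 2) ^ q = ((1 + a) + (b + c)) ^ q" by (simp add: norm3_sq a_def b_def c_def add.assoc)
  also have "\<dots> \<le> 2 ^ q * ((1 + a) ^ q + (b + c) ^ q)" using abc by (intro pow_sum2) auto
  also have "\<dots> \<le> 2 ^ q * (2 ^ q * (1 ^ q + a ^ q) + 2 ^ q * (b ^ q + c ^ q))"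
    using abc by (intro mult_left_mono add_mono pow_sum2) auto
  also have "\<dots> = 4 ^ q * (1 + a ^ q + b ^ q + c ^ q)"
  proof -
    have "(4::real) ^ q = 2 ^ q * 2 ^ q" by (metis power_mult_distrib numeral_times_numeral semiring_norm(12) semiring_norm(13) num_double)
    then show ?thesis by (simp add: algebra_simps)
  qed
  finally have r: "(1 + norm v ^ 2) ^ q \<le> 4 ^ q * (1 + a ^ q + b ^ q + c ^ q)" .
  have e: "ennreal (4 ^ q * (1 + a ^ q + b ^ q + c ^ q)) = ennreal (4 ^ q) * (1 + ennreal (a ^ q) + ennreal (b ^ q) + ennreal (c ^ q))"
    using abc by (simp add: ennreal_mult)
  have "ennreal ((1 + norm v ^ 2) ^ q) \<le> ennreal (4 ^ q * (1 + a ^ q + b ^ q + c ^ q))"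
    using r by (rule ennreal_leI)
  also note e
  finally show ?thesis by (simp add: a_def b_def c_def power_mult)
qed

lemma h_moment:
  fixes B :: "'w \<Rightarrow> real \<Rightarrow> real^3"
  assumes BB: "brownian_bridge3 M B" and u: "u \<in> {0..1}"
  shows "(\<integral>\<^sup>+ \<omega>. ennreal ((1 + norm (B \<omega> u) ^ 2) ^ q) \<partial>M)
     \<le> ennreal (4 ^ q) * (1 + ennreal (fact (2 * q)) + ennreal (fact (2 * q)) + ennreal (fact (2 * q)))"
proof -
  interpret prob_space M using BB unfolding brownian_bridge3_def by blast
  have Bm: "(\<lambda>\<omega>. B \<omega> u) \<in> borel_measurable M" using BB u unfolding brownian_bridge3_def by auto
  have Bj[measurable]: "(\<lambda>\<omega>. B \<omega> u $ j) \<in> borel_measurable M" for j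
    using measurable_compose[OF Bm borel_measurable_nth] by simp
  have "(\<integral>\<^sup>+ \<omega>. ennreal ((1 + norm (B \<omega> u) ^ 2) ^ q) \<partial>M)
      \<le> (\<integral>\<^sup>+ \<omega>. ennreal (4 ^ q) * (1 + ennreal ((B \<omega> u $ 1) ^ (2 * q)) + ennreal ((B \<omega> u $ 2) ^ (2 * q)) + ennreal ((B \<omega> u $ 3) ^ (2 * q))) \<partial>M)"
    by (intro nn_integral_mono h_pointwise)
  also have "\<dots> = ennreal (4 ^ q) * (\<integral>\<^sup>+ \<omega>. (1 + ennreal ((B \<omega> u $ 1) ^ (2 * q)) + ennreal ((B \<omega> u $ 2) ^ (2 * q)) + ennreal ((B \<omega> u $ 3) ^ (2 * q))) \<partial>M)"
    by (rule nn_integral_cmult) measurable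
  also have "(\<integral>\<^sup>+ \<omega>. (1 + ennreal ((B \<omega> u $ 1) ^ (2 * q)) + ennreal ((B \<omega> u $ 2) ^ (2 * q)) + ennreal ((B \<omega> u $ 3) ^ (2 * q))) \<partial>M)
      = (\<integral>\<^sup>+ \<omega>. 1 \<partial>M) + (\<integral>\<^sup>+ \<omega>. ennreal ((B \<omega> u $ 1) ^ (2 * q)) \<partial>M) + (\<integral>\<^sup>+ \<omega>. ennreal ((B \<omega> u $ 2) ^ (2 * q)) \<partial>M) + (\<integral>\<^sup>+ \<omega>. ennreal ((B \<omega> u $ 3) ^ (2 * q)) \<partial>M)"
    by (simp add: nn_integral_add)
  also have "(\<integral>\<^sup>+ \<omega>. 1 \<partial>M) = 1" by (simp add: emeasure_space_1)
  also have "1 + (\<integral>\<^sup>+ \<omega>. ennreal ((B \<omega> u $ 1) ^ (2 * q)) \<partial>M) + (\<integral>\<^sup>+ \<omega>. ennreal ((B \<omega> u $ 2) ^ (2 * q)) \<partial>M) + (\<integral>\<^sup>+ \<omega>. ennreal ((B \<omega> u $ 3) ^ (2 * q)) \<partial>M)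
      \<le> 1 + ennreal (fact (2 * q)) + ennreal (fact (2 * q)) + ennreal (fact (2 * q))"
    by (intro add_mono order_refl coord_moment[OF BB u])
  finally show ?thesis by (simp add: mult_left_mono)
qed



lemma B_joint_meas:
  fixes B :: "'w \<Rightarrow> real \<Rightarrow> real^3"
  assumes BB: "brownian_bridge3 M B"
  shows "(\<lambda>z. B (fst z) (max 0 (min 1 (snd z)))) \<in> borel_measurable (M \<Otimes>\<^sub>M lborel)"
proof -
  define cl where "cl u = max 0 (min 1 u)" for u :: real
  define r where "r n u = real (nat \<lfloor>real (Suc n) * cl u\<rfloor>) / real (Suc n)" for n u
  have Bt: "(\<lambda>\<omega>. B \<omega> t) \<in> borel_measurable M" if "t \<in> {0..1}" for t
    using BB that unfolding brownian_bridge3_def by auto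
  have Bc: "continuous_on {0..1} (B \<omega>)" if "\<omega> \<in> space M" for \<omega>
    using BB that unfolding brownian_bridge3_def by auto
  have cl01: "cl u \<in> {0..1}" for u by (auto simp: cl_def)
  have rb: "cl u - 1 / real (Suc n) \<le> r n u \<and> r n u \<le> cl u" for n u
  proof -
    define y where "y = real (Suc n) * cl u"
    have y0: "0 \<le> y" using cl01[of u] by (simp add: y_def)
    have fl0: "0 \<le> \<lfloor>y\<rfloor>" using y0 by simp
    have e: "real (nat \<lfloor>y\<rfloor>) = real_of_int \<lfloor>y\<rfloor>" using fl0 by simp
    have f1: "real_of_int \<lfloor>y\<rfloor> \<le> y" by (rule of_int_floor_le)
    have f2: "y - 1 < real_of_int \<lfloor>y\<rfloor>" by linarith
    have rr: "r n u = real_of_int \<lfloor>y\<rfloor> / real (Suc n)" unfolding r_def y_def[symmetric] e by (rule refl)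
    have np: "0 < real (Suc n)" by simp
    have "r n u \<le> cl u" unfolding rr using f1 np by (simp add: divide_le_eq y_def mult.commute)
    moreover have "cl u - 1 / real (Suc n) \<le> r n u"
    proof -
      have "cl u - 1 / real (Suc n) = (y - 1) / real (Suc n)" using np by (simp add: y_def field_simps)
      also have "\<dots> \<le> real_of_int \<lfloor>y\<rfloor> / real (Suc n)" using f2 np by (intro divide_right_mono) auto
      finally show ?thesis unfolding rr .
    qed
    ultimately show ?thesis by simp
  qed
  have r01: "r n u \<in> {0..1}" for n u
  proof -
    have "0 \<le> r n u" by (simp add: r_def)
    then show ?thesis using rb[of u n] cl01[of u] by auto
  qed
  have rlim: "(\<lambda>n. r n u) \<longlonglongrightarrow> cl u" for u
  proof (rule real_tendsto_sandwich[where f="\<lambda>n. cl u - 1 / real (Suc n)" and h="\<lambda>n. cl u"])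
    show "\<forall>\<^sub>F n in sequentially. cl u - 1 / real (Suc n) \<le> r n u" using rb by auto
    show "\<forall>\<^sub>F n in sequentially. r n u \<le> cl u" using rb by auto
    have "(\<lambda>n. 1 / real (Suc n)) \<longlonglongrightarrow> 0" using LIMSEQ_Suc[OF lim_1_over_n] by simp
    then show "(\<lambda>n. cl u - 1 / real (Suc n)) \<longlonglongrightarrow> cl u" using tendsto_diff[OF tendsto_const] by fastforce
  qed simp
  define F where "F n z = B (fst z) (r n (snd z))" for n z
  have Fm: "F n \<in> borel_measurable (M \<Otimes>\<^sub>M lborel)" for n
  proof -
    define f where "f k z = B (fst z) (min 1 (real k / real (Suc n)))" for k :: nat and z :: "'w \<times> real"
    define g where "g z = nat \<lfloor>real (Suc n) * cl (snd z)\<rfloor>" for z :: "'w \<times> real"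
    have fm: "f k \<in> borel_measurable (M \<Otimes>\<^sub>M lborel)" for k
    proof -
      have "min 1 (real k / real (Suc n)) \<in> {0..1}" by auto
      from measurable_compose[OF measurable_fst Bt[OF this]]
      show ?thesis unfolding f_def by (simp add: comp_def)
    qed
    have gm: "g \<in> measurable (M \<Otimes>\<^sub>M lborel) (count_space UNIV)"
    proof -
      have "(\<lambda>z::'w \<times> real. real (Suc n) * cl (snd z)) \<in> borel_measurable (M \<Otimes>\<^sub>M lborel)"
        unfolding cl_def by measurable
      from measurable_compose[OF this measurable_real_floor]
      have "(\<lambda>z::'w \<times> real. \<lfloor>real (Suc n) * cl (snd z)\<rfloor>) \<in> measurable (M \<Otimes>\<^sub>M lborel) (count_space UNIV)"
        by (simp add: comp_def)
      from measurable_compose[OF this, of nat "count_space UNIV"]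
      show ?thesis unfolding g_def by (simp add: comp_def)
    qed
    have "(\<lambda>z. f (g z) z) \<in> borel_measurable (M \<Otimes>\<^sub>M lborel)"
      by (rule measurable_compose_countable[OF fm gm])
    moreover have "(\<lambda>z. f (g z) z) = F n"
    proof
      fix z :: "'w \<times> real"
      have "r n (snd z) \<le> 1" using r01 by auto
      then show "f (g z) z = F n z" unfolding f_def g_def F_def r_def[symmetric] 
        by (simp add: r_def)
    qed
    ultimately show ?thesis by simp
  qed
  have "(\<lambda>z. B (fst z) (cl (snd z))) \<in> borel_measurable (M \<Otimes>\<^sub>M lborel)"
  proof (rule borel_measurable_LIMSEQ_metric[OF Fm])
    fix z :: "'w \<times> real" assume z: "z \<in> space (M \<Otimes>\<^sub>M lborel)"
    then have "fst z \<in> space M" by (auto simp: space_pair_measure)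
    show "(\<lambda>n. F n z) \<longlonglongrightarrow> B (fst z) (cl (snd z))"
      unfolding F_def
      by (rule continuous_on_tendsto_compose[OF Bc[OF \<open>fst z \<in> space M\<close>] rlim cl01]) (use r01 in auto)
  qed
  then show ?thesis by (simp add: cl_def)
qed



lemma nn_int_eq:
  fixes f :: "real \<Rightarrow> real" and \<beta> :: "real \<Rightarrow> real^3"
  assumes fc: "continuous_on {0..1} f" and f0: "\<And>u. u \<in> {0..1} \<Longrightarrow> 0 \<le> f u"
  shows "(\<integral>\<^sup>+ u. ennreal (indicator {0..1} u * f (max 0 (min 1 u))) \<partial>lborel) = ennreal (integral {0..1} f)"
proof -
  have "(\<integral>\<^sup>+ u. ennreal (indicator {0..1} u * f (max 0 (min 1 u))) \<partial>lborel)
      = (\<integral>\<^sup>+ u. ennreal (indicator {0..1} u * f u) \<partial>lborel)"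
    by (intro nn_integral_cong) (auto simp: indicator_def)
  also have "\<dots> = ennreal (integral {0..1} f)"
    by (rule nn_integral_has_integral_lebesgue[OF f0])
       (use integrable_continuous_interval[OF fc] in \<open>auto simp: has_integral_integral\<close>)
  finally show ?thesis .
qed

theorem lemmaA1:
  fixes a a' :: "real \<Rightarrow> real" and x :: real
    and M :: "'w measure" and B :: "'w \<Rightarrow> real \<Rightarrow> real^3"
  assumes deriv: "\<And>z. z \<ge> 0 \<Longrightarrow> (a has_real_derivative a' z) (at z within {0..})"
    and cont_deriv: "continuous_on {0..} a'"
    and scale: "(\<integral>\<^sup>+ w\<in>{0..}. ennreal (exp (- 2 * integral {0..w} a)) \<partial>lborel) = \<infinity>"
    and gamma_bdd: "\<exists>C. \<forall>z\<ge>0. (a z ^ 2 + a' z) / 2 \<ge> C"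
    and lip: "\<exists>c1 c2 (n::nat). c1 > 0 \<and> c2 > 0 \<and>
               (\<forall>\<kappa>>0. \<forall>v1 v2. 0 \<le> v1 \<longrightarrow> v1 < v2 \<longrightarrow> v2 \<le> \<kappa> \<longrightarrow>
                  \<bar>(a' v2 - a' v1) / (v2 - v1)\<bar> \<le> c1 + c2 * \<kappa> ^ n)"
    and x_pos: "x > 0"
    and BB: "brownian_bridge3 M B"
  shows "\<forall>T\<ge>0. \<exists>\<Phi> \<in> borel_measurable M.
           (\<forall>\<omega>\<in>space M. \<forall>s\<in>{0..T}. \<forall>t\<in>{0..T}.
              \<bar>exp (- t * integral {0..1} (\<lambda>u. (\<lambda>z. (a z ^ 2 + a' z) / 2)
                   (norm ((u * x) *\<^sub>R axis 1 1 + sqrt t *\<^sub>R B \<omega> u))))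
             - exp (- s * integral {0..1} (\<lambda>u. (\<lambda>z. (a z ^ 2 + a' z) / 2)
                   (norm ((u * x) *\<^sub>R axis 1 1 + sqrt s *\<^sub>R B \<omega> u))))\<bar>
              \<le> \<Phi> \<omega> * \<bar>t - s\<bar>) \<and>
           (\<forall>m::nat. (\<integral>\<^sup>+ \<omega>. ennreal (\<bar>\<Phi> \<omega>\<bar> ^ m) \<partial>M) < \<infinity>)"
proof (intro allI impI)
  fix T :: real assume T: "T \<ge> 0"
  define g where "g = (\<lambda>z. (a z ^ 2 + a' z) / 2)"
  obtain D N where D: "D > 0" and glip0: "\<forall>K p q. 0 \<le> p \<longrightarrow> 0 \<le> q \<longrightarrow> p \<le> K \<longrightarrow> q \<le> K \<longrightarrow>
            \<bar>(a p ^ 2 + a' p) / 2 - (a q ^ 2 + a' q) / 2\<bar> \<le> D * (1 + K) ^ N * \<bar>p - q\<bar>"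
    using gamma_lip[OF deriv lip] by blast
  have glip: "\<And>K p q. 0 \<le> p \<Longrightarrow> 0 \<le> q \<Longrightarrow> p \<le> K \<Longrightarrow> q \<le> K \<Longrightarrow> \<bar>g p - g q\<bar> \<le> D * (1 + K) ^ N * \<bar>p - q\<bar>"
    using glip0 unfolding g_def by blast
  obtain C where gb0: "\<forall>z\<ge>0. (a z ^ 2 + a' z) / 2 \<ge> C" using gamma_bdd by blast
  have gb: "\<And>z. z \<ge> 0 \<Longrightarrow> g z \<ge> C" using gb0 unfolding g_def by blast
  have acont: "continuous_on {0..} a"
    unfolding continuous_on_eq_continuous_within
    using deriv by (auto intro: DERIV_continuous)
  have gcont: "continuous_on {0..} g" unfolding g_def by (intro continuous_intros acont cont_deriv) auto
  interpret PS: prob_space M using BB unfolding brownian_bridge3_def by blast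
  have Bc: "continuous_on {0..1} (B \<omega>)" if "\<omega> \<in> space M" for \<omega>
    using BB that unfolding brownian_bridge3_def by auto
  define P where "P = N + 1"
  define h where "h v = (1 + norm v ^ 2) ^ P" for v :: "real^3"
  define cl where "cl u = max 0 (min 1 u)" for u :: real
  define E1 where "E1 = 2 ^ (N+1) * (\<bar>g 0\<bar> + D * (1 + x + sqrt T) ^ N * (x + 2 * sqrt T))"
  define Kc where "Kc = exp (T * \<bar>C\<bar>) * E1"
  define Hn where "Hn \<omega> = (\<integral>\<^sup>+ u. ennreal (indicator {0..1} u * h (B \<omega> (cl u))) \<partial>lborel)" for \<omega>
  define \<Phi> where "\<Phi> \<omega> = Kc * enn2real (Hn \<omega>)" for \<omega>
  have E10: "0 \<le> E1" using D x_pos T by (simp add: E1_def)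
  have Kc0: "0 \<le> Kc" using E10 by (simp add: Kc_def)
  have h0: "0 \<le> h v" for v by (simp add: h_def)
  have hc: "continuous_on {0..1} (\<lambda>u. h (B \<omega> u))" if "\<omega> \<in> space M" for \<omega>
    unfolding h_def by (intro continuous_intros Bc that)
  have jm[measurable]: "(\<lambda>z. B (fst z) (cl (snd z))) \<in> borel_measurable (M \<Otimes>\<^sub>M lborel)"
    using B_joint_meas[OF BB] by (simp add: cl_def)
  have im: "(\<lambda>z. ennreal (indicator {0..1} (snd z) * h (B (fst z) (cl (snd z))) ^ m)) \<in> borel_measurable (M \<Otimes>\<^sub>M lborel)" for m
    unfolding h_def by measurable
  have Hn_eq: "Hn \<omega> = ennreal (integral {0..1} (\<lambda>u. h (B \<omega> u)))" if "\<omega> \<in> space M" for \<omega>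
    unfolding Hn_def cl_def by (rule nn_int_eq[OF hc[OF that] h0])
  have Hm_eq: "(\<integral>\<^sup>+ u. ennreal (indicator {0..1} u * h (B \<omega> (cl u)) ^ m) \<partial>lborel) = ennreal (integral {0..1} (\<lambda>u. h (B \<omega> u) ^ m))"
    if "\<omega> \<in> space M" for \<omega> m
    unfolding cl_def by (rule nn_int_eq) (intro continuous_intros hc[OF that], simp add: h0)
  show "\<exists>\<Phi> \<in> borel_measurable M.
           (\<forall>\<omega>\<in>space M. \<forall>s\<in>{0..T}. \<forall>t\<in>{0..T}.
              \<bar>exp (- t * integral {0..1} (\<lambda>u. (\<lambda>z. (a z ^ 2 + a' z) / 2)
                   (norm ((u * x) *\<^sub>R axis 1 1 + sqrt t *\<^sub>R B \<omega> u))))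
             - exp (- s * integral {0..1} (\<lambda>u. (\<lambda>z. (a z ^ 2 + a' z) / 2)
                   (norm ((u * x) *\<^sub>R axis 1 1 + sqrt s *\<^sub>R B \<omega> u))))\<bar>
              \<le> \<Phi> \<omega> * \<bar>t - s\<bar>) \<and>
           (\<forall>m::nat. (\<integral>\<^sup>+ \<omega>. ennreal (\<bar>\<Phi> \<omega>\<bar> ^ m) \<partial>M) < \<infinity>)"
  proof (intro bexI conjI ballI allI)
    show "\<Phi> \<in> borel_measurable M"
    proof -
      have "(\<lambda>\<omega>. Hn \<omega>) \<in> borel_measurable M"
        unfolding Hn_def
        using lborel.borel_measurable_nn_integral[of "\<lambda>\<omega> u. ennreal (indicator {0..1} u * h (B \<omega> (cl u)))" M]
              im[of 1] by (simp add: split_beta')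
      then show ?thesis unfolding \<Phi>_def by measurable
    qed
  next
    fix \<omega> s t assume \<omega>: "\<omega> \<in> space M" and s: "s \<in> {0..T}" and t: "t \<in> {0..T}"
    have "\<bar>exp (- t * integral {0..1} (\<lambda>u. g (norm ((u * x) *\<^sub>R axis 1 1 + sqrt t *\<^sub>R B \<omega> u))))
          - exp (- s * integral {0..1} (\<lambda>u. g (norm ((u * x) *\<^sub>R axis 1 1 + sqrt s *\<^sub>R B \<omega> u))))\<bar>
         \<le> exp (T * \<bar>C\<bar>) * integral {0..1} (\<lambda>u. Rf \<bar>g 0\<bar> D N x T (norm (B \<omega> u))) * \<bar>t - s\<bar>"
      by (rule xi_lip[OF gcont glip gb _ Bc[OF \<omega>] x_pos s t]) (use D in auto)
    also have "integral {0..1} (\<lambda>u. Rf \<bar>g 0\<bar> D N x T (norm (B \<omega> u))) \<le> E1 * integral {0..1} (\<lambda>u. h (B \<omega> u))"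
    proof -
      have "integral {0..1} (\<lambda>u. Rf \<bar>g 0\<bar> D N x T (norm (B \<omega> u))) \<le> integral {0..1} (\<lambda>u. E1 * h (B \<omega> u))"
      proof (rule Henstock_Kurzweil_Integration.integral_le)
        show "(\<lambda>u. Rf \<bar>g 0\<bar> D N x T (norm (B \<omega> u))) integrable_on {0..1}"
          by (rule integrable_continuous_interval) (unfold Rf_def, intro continuous_intros Bc[OF \<omega>])
        show "(\<lambda>u. E1 * h (B \<omega> u)) integrable_on {0..1}"
          by (rule integrable_continuous_interval) (intro continuous_intros hc[OF \<omega>])
        fix u show "Rf \<bar>g 0\<bar> D N x T (norm (B \<omega> u)) \<le> E1 * h (B \<omega> u)"
          unfolding E1_def h_def P_def using Rf_bound[of "\<bar>g 0\<bar>" D x T "norm (B \<omega> u)" N] D x_pos T by simp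
      qed
      then show ?thesis by simp
    qed
    also have "exp (T * \<bar>C\<bar>) * (E1 * integral {0..1} (\<lambda>u. h (B \<omega> u))) * \<bar>t - s\<bar> = \<Phi> \<omega> * \<bar>t - s\<bar>"
      using Hn_eq[OF \<omega>] by (simp add: \<Phi>_def Kc_def integral_nonneg hc[OF \<omega>] h0 integrable_continuous_interval)
    finally have fin: "\<bar>exp (- t * integral {0..1} (\<lambda>u. g (norm ((u * x) *\<^sub>R axis 1 1 + sqrt t *\<^sub>R B \<omega> u))))
          - exp (- s * integral {0..1} (\<lambda>u. g (norm ((u * x) *\<^sub>R axis 1 1 + sqrt s *\<^sub>R B \<omega> u))))\<bar>
         \<le> \<Phi> \<omega> * \<bar>t - s\<bar>"
      by (simp add: mult_right_mono mult_left_mono)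
    show "\<bar>exp (- t * integral {0..1} (\<lambda>u. (\<lambda>z. (a z ^ 2 + a' z) / 2)
                   (norm ((u * x) *\<^sub>R axis 1 1 + sqrt t *\<^sub>R B \<omega> u))))
             - exp (- s * integral {0..1} (\<lambda>u. (\<lambda>z. (a z ^ 2 + a' z) / 2)
                   (norm ((u * x) *\<^sub>R axis 1 1 + sqrt s *\<^sub>R B \<omega> u))))\<bar>
              \<le> \<Phi> \<omega> * \<bar>t - s\<bar>"
      using fin by (simp only: g_def)
  next
    fix m :: nat
    define Cq where "Cq = ennreal (4 ^ (P * m)) * (1 + ennreal (fact (2 * (P * m))) + ennreal (fact (2 * (P * m))) + ennreal (fact (2 * (P * m))))"
    have Cq: "Cq < \<infinity>" by (simp add: Cq_def ennreal_mult_less_top)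
    have PSF: "pair_sigma_finite M lborel"
      unfolding pair_sigma_finite_def using PS.prob_space_axioms
      by (simp add: prob_space_imp_sigma_finite sigma_finite_lborel)
    have pw: "(\<integral>\<^sup>+ \<omega>. ennreal (indicator {0..1} u * h (B \<omega> (cl u)) ^ m) \<partial>M) \<le> Cq * indicator {0..1} u" for u :: real
      proof (cases "u \<in> {0..1}")
        case True
        then have "cl u = u" by (auto simp: cl_def)
        have "(\<integral>\<^sup>+ \<omega>. ennreal (indicator {0..1} u * h (B \<omega> (cl u)) ^ m) \<partial>M)
            = (\<integral>\<^sup>+ \<omega>. ennreal ((1 + norm (B \<omega> u) ^ 2) ^ (P * m)) \<partial>M)"
          using True \<open>cl u = u\<close> by (simp add: h_def power_mult)
        also have "\<dots> \<le> Cq" unfolding Cq_def by (rule h_moment[OF BB True])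
        finally show ?thesis using True by simp
      next
        case False then show ?thesis by simp
      qed
    have "(\<integral>\<^sup>+ u. (\<integral>\<^sup>+ \<omega>. ennreal (indicator {0..1} u * h (B \<omega> (cl u)) ^ m) \<partial>M) \<partial>lborel) \<le> (\<integral>\<^sup>+ u. Cq * indicator {0..1::real} u \<partial>lborel)"
      by (intro nn_integral_mono pw)
    also have "(\<integral>\<^sup>+ u. Cq * indicator {0..1::real} u \<partial>lborel) = Cq" by (simp add: nn_integral_cmult_indicator)
    finally have Fin: "(\<integral>\<^sup>+ u. (\<integral>\<^sup>+ \<omega>. ennreal (indicator {0..1} u * h (B \<omega> (cl u)) ^ m) \<partial>M) \<partial>lborel) \<le> Cq" .
    have "(\<integral>\<^sup>+ \<omega>. ennreal (\<bar>\<Phi> \<omega>\<bar> ^ m) \<partial>M)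
        \<le> (\<integral>\<^sup>+ \<omega>. ennreal (Kc ^ m) * (\<integral>\<^sup>+ u. ennreal (indicator {0..1} u * h (B \<omega> (cl u)) ^ m) \<partial>lborel) \<partial>M)"
    proof (rule nn_integral_mono)
      fix \<omega> assume \<omega>: "\<omega> \<in> space M"
      define I where "I = integral {0..1} (\<lambda>u. h (B \<omega> u))"
      have I0: "0 \<le> I" unfolding I_def by (rule integral_nonneg) (auto simp: h0 integrable_continuous_interval hc[OF \<omega>])
      have "\<Phi> \<omega> = Kc * I" using Hn_eq[OF \<omega>] I0 by (simp add: \<Phi>_def I_def)
      then have "\<bar>\<Phi> \<omega>\<bar> ^ m = Kc ^ m * I ^ m" using Kc0 I0 by (simp add: abs_mult power_mult_distrib)
      also have "I ^ m \<le> integral {0..1} (\<lambda>u. h (B \<omega> u) ^ m)"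
        unfolding I_def by (rule pow_integral_le[OF hc[OF \<omega>]]) (simp add: h0)
      then have "Kc ^ m * I ^ m \<le> Kc ^ m * integral {0..1} (\<lambda>u. h (B \<omega> u) ^ m)"
        using Kc0 by (intro mult_left_mono) auto
      finally have "ennreal (\<bar>\<Phi> \<omega>\<bar> ^ m) \<le> ennreal (Kc ^ m * integral {0..1} (\<lambda>u. h (B \<omega> u) ^ m))"
        by (rule ennreal_leI)
      also have "\<dots> = ennreal (Kc ^ m) * ennreal (integral {0..1} (\<lambda>u. h (B \<omega> u) ^ m))"
        using Kc0 by (simp add: ennreal_mult')
      also have "\<dots> = ennreal (Kc ^ m) * (\<integral>\<^sup>+ u. ennreal (indicator {0..1} u * h (B \<omega> (cl u)) ^ m) \<partial>lborel)"
        using Hm_eq[OF \<omega>] by simp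
      finally show "ennreal (\<bar>\<Phi> \<omega>\<bar> ^ m) \<le> ennreal (Kc ^ m) * (\<integral>\<^sup>+ u. ennreal (indicator {0..1} u * h (B \<omega> (cl u)) ^ m) \<partial>lborel)" .
    qed
    also have "\<dots> = ennreal (Kc ^ m) * (\<integral>\<^sup>+ \<omega>. (\<integral>\<^sup>+ u. ennreal (indicator {0..1} u * h (B \<omega> (cl u)) ^ m) \<partial>lborel) \<partial>M)"
      by (rule nn_integral_cmult)
         (use lborel.borel_measurable_nn_integral[of "\<lambda>\<omega> u. ennreal (indicator {0..1} u * h (B \<omega> (cl u)) ^ m)" M] im[of m] in \<open>simp add: split_beta'\<close>)
    also have "(\<integral>\<^sup>+ \<omega>. (\<integral>\<^sup>+ u. ennreal (indicator {0..1} u * h (B \<omega> (cl u)) ^ m) \<partial>lborel) \<partial>M)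
        = (\<integral>\<^sup>+ u. (\<integral>\<^sup>+ \<omega>. ennreal (indicator {0..1} u * h (B \<omega> (cl u)) ^ m) \<partial>M) \<partial>lborel)"
      by (rule pair_sigma_finite.Fubini'[OF PSF, symmetric]) (use im[of m] in \<open>simp add: split_beta'\<close>)
    also have "ennreal (Kc ^ m) * (\<integral>\<^sup>+ u. (\<integral>\<^sup>+ \<omega>. ennreal (indicator {0..1} u * h (B \<omega> (cl u)) ^ m) \<partial>M) \<partial>lborel) \<le> ennreal (Kc ^ m) * Cq"
      by (rule mult_left_mono[OF Fin]) simp
    finally have fin3: "(\<integral>\<^sup>+ \<omega>. ennreal (\<bar>\<Phi> \<omega>\<bar> ^ m) \<partial>M) \<le> ennreal (Kc ^ m) * Cq" .
    have "ennreal (Kc ^ m) * Cq < \<infinity>" using Cq by (simp add: ennreal_mult_less_top)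
    with fin3 show "(\<integral>\<^sup>+ \<omega>. ennreal (\<bar>\<Phi> \<omega>\<bar> ^ m) \<partial>M) < \<infinity>" by (rule order.strict_trans1)
  qed
qed


end
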